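(* Let $g$ be a continuous function on $[a,b]$ which is DC on $(a,b)$, and let $P\subset[a,b]$ be a nowhere dense set. Then the set $g(P)$ is nowhere dense in $\mathbb{R}$.
   Context: A function on an open interval is DC if it is the difference of two convex functions on that interval. *)

theory Defs
  imports "HOL-Analysis.Analysis"
begin

definition DC_on :: "real set \<Rightarrow> (real \<Rightarrow> real) \<Rightarrow> bool" where
  "DC_on S g \<longleftrightarrow> (\<exists>u v. convex_on S u \<and> convex_on S v \<and> (\<forall>x\<in>S. g x = u x - v x))"

definition nowhere_dense :: "real set \<Rightarrow> bool" where
  "nowhere_dense A \<longleftrightarrow> interior (closure A) = {}"

end

theory Submission
  imports Defs
begin


lemma sard_1d:
  fixes g :: "real \<Rightarrow> real"
  assumes "\<And>x. x \<in> S \<Longrightarrow> (g has_real_derivative 0) (at x)"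
  shows "negligible (g ` S)"
proof -
  define F :: "real^1 \<Rightarrow> real^1" where "F = (\<lambda>w. vec (g (w$1)))"
  have der: "(F has_derivative (\<lambda>h. 0)) (at w within vec ` S)" if w: "w \<in> vec ` S" for w
  proof -
    obtain x where x: "x \<in> S" "w = vec x" using w by auto
    have g0: "(g has_derivative (\<lambda>h. 0)) (at (w$1))"
      using assms[OF x(1)] x(2) by (simp add: has_field_derivative_def mult_zero_left[abs_def])
    have 1: "((\<lambda>w::real^1. w$1) has_derivative (\<lambda>h. h$1)) (at w)"
      by (simp add: bounded_linear_vec_nth bounded_linear_imp_has_derivative)
    have "((\<lambda>w. g (w$1)) has_derivative (\<lambda>h. 0)) (at w)"
      using has_derivative_compose[OF 1 g0] by simp
    moreover have "(vec has_derivative vec) (at (g (w$1)))"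
      by (simp add: linear_imp_has_derivative)
    ultimately have "((\<lambda>w. vec (g (w$1)) :: real^1) has_derivative (\<lambda>h. vec 0)) (at w)"
      using has_derivative_compose by fastforce
    then show ?thesis unfolding F_def
      by (simp add: has_derivative_at_withinI)
  qed
  have "negligible (F ` (vec ` S))"
    by (rule baby_Sard[OF _ der]) (auto simp: matrix_def rank_0[unfolded zero_vec_def])
  moreover have "F ` (vec ` S) = vec ` (g ` S)" unfolding F_def by (auto simp: image_iff)
  ultimately have n: "negligible (vec ` (g ` S) :: (real^1) set)" by simp
  have "negligible ((\<lambda>w::real^1. w$1) ` (vec ` (g ` S)))"
    by (rule negligible_differentiable_image_negligible[OF _ n])
       (auto intro!: differentiable_at_imp_differentiable_on bounded_linear_imp_differentiable bounded_linear_vec_nth)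
  moreover have "(\<lambda>w::real^1. w$1) ` (vec ` (g ` S)) = g ` S" by (auto simp: image_iff)
  ultimately show ?thesis by simp
qed


lemma three_slope:
  fixes u :: "real \<Rightarrow> real"
  assumes "convex_on {a<..<b} u" "a < t" "t < x" "x < y" "y < b"
  shows "(u x - u t) / (x - t) \<le> (u y - u x) / (y - x)"
proof -
  have 1: "(u t - u x) / (t - x) \<le> (u t - u y) / (t - y)"
    using convex_on_slope_le(1)[OF assms(1), of t y x] assms by auto
  have 2: "(u t - u y) / (t - y) \<le> (u x - u y) / (x - y)"
    using convex_on_slope_le(2)[OF assms(1), of t y x] assms by auto
  have e1: "(u t - u x) / (t - x) = (u x - u t) / (x - t)"
    by (metis minus_diff_eq minus_divide_divide)
  have e2: "(u x - u y) / (x - y) = (u y - u x) / (y - x)"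
    by (metis minus_diff_eq minus_divide_divide)
  show ?thesis using 1 2 e1 e2 by linarith
qed

lemma convex_subgradient:
  fixes u :: "real \<Rightarrow> real"
  assumes cu: "convex_on {a<..<b} u"
  shows "\<exists>\<phi>. mono_on {a<..<b} \<phi> \<and>
           (\<forall>x\<in>{a<..<b}. \<forall>y\<in>{a<..<b}. \<phi> x * (y - x) \<le> u y - u x)"
proof -
  define \<phi> where "\<phi> x = Inf ((\<lambda>y. (u y - u x) / (y - x)) ` {x<..<b})" for x
  have lo: "(u x - u t) / (x - t) \<le> \<phi> x" if "a < t" "t < x" "x < b" for t x
    unfolding \<phi>_def
    by (rule cInf_greatest) (use that three_slope[OF cu] in auto)
  have hi: "\<phi> x \<le> (u y - u x) / (y - x)" if H: "a < x" "x < y" "y < b" for x y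
  proof -
    obtain t where "a < t" "t < x" using dense H(1) by blast
    have bdd: "bdd_below ((\<lambda>y. (u y - u x) / (y - x)) ` {x<..<b})"
      by (rule bdd_belowI2[where m="(u x - u t) / (x - t)"])
         (use \<open>a < t\<close> \<open>t < x\<close> three_slope[OF cu] in auto)
    show ?thesis unfolding \<phi>_def
      by (rule cInf_lower[OF _ bdd]) (use H in auto)
  qed
  have sub: "\<phi> x * (y - x) \<le> u y - u x" if "x \<in> {a<..<b}" "y \<in> {a<..<b}" for x y
  proof (cases y x rule: linorder_cases)
    case less
    then have "(u x - u y) / (x - y) \<le> \<phi> x" using lo that by auto
    then have "(u x - u y) \<le> \<phi> x * (x - y)" using less by (simp add: divide_le_eq)
    then show ?thesis by (simp add: algebra_simps)
  next
    case greater
    then have "\<phi> x \<le> (u y - u x) / (y - x)" using hi that by auto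
    then show ?thesis using greater by (simp add: le_divide_eq)
  qed simp
  have "mono_on {a<..<b} \<phi>"
  proof (rule mono_onI)
    fix x y assume xy: "x \<in> {a<..<b}" "y \<in> {a<..<b}" "x \<le> y"
    show "\<phi> x \<le> \<phi> y"
    proof (cases "x = y")
      case False
      then have "x < y" using xy by auto
      then show ?thesis using hi[of x y] lo[of x y] xy by fastforce
    qed simp
  qed
  then show ?thesis using sub by blast
qed


lemma slope_bound:
  fixes u \<phi> :: "real \<Rightarrow> real"
  assumes sub: "\<forall>x\<in>{a<..<b}. \<forall>y\<in>{a<..<b}. \<phi> x * (y - x) \<le> u y - u x"
    and x: "x \<in> {a<..<b}" and z: "z \<in> {a<..<b}" and zx: "z \<noteq> x"
  shows "\<bar>(u z - u x) / (z - x) - \<phi> x\<bar> \<le> \<bar>\<phi> z - \<phi> x\<bar>"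
proof -
  have 1: "\<phi> x * (z - x) \<le> u z - u x" using sub x z by blast
  have 2: "\<phi> z * (x - z) \<le> u x - u z" using sub x z by blast
  show ?thesis
  proof (cases "z > x")
    case True
    have "\<phi> x \<le> (u z - u x) / (z - x)" using 1 True by (simp add: le_divide_eq)
    moreover have "(u z - u x) / (z - x) \<le> \<phi> z" using 2 True
      by (simp add: divide_le_eq algebra_simps)
    ultimately show ?thesis by linarith
  next
    case False
    then have lt: "z < x" using zx by auto
    have "(u z - u x) / (z - x) \<le> \<phi> x" using 1 lt by (simp add: divide_le_eq mult.commute)
    moreover have "u z - u x \<le> \<phi> z * (z - x)" using 2 by (simp add: algebra_simps)
    then have "\<phi> z \<le> (u z - u x) / (z - x)" using lt
      by (simp add: le_divide_eq)
    ultimately show ?thesis by linarith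
  qed
qed

lemma key_deriv:
  fixes u v g \<phi>u \<phi>v :: "real \<Rightarrow> real"
  assumes subu: "\<forall>x\<in>{a<..<b}. \<forall>y\<in>{a<..<b}. \<phi>u x * (y - x) \<le> u y - u x"
    and subv: "\<forall>x\<in>{a<..<b}. \<forall>y\<in>{a<..<b}. \<phi>v x * (y - x) \<le> v y - v x"
    and geq: "\<forall>x\<in>{a<..<b}. g x = u x - v x"
    and x: "x \<in> {a<..<b}" and cu: "isCont \<phi>u x" and cv: "isCont \<phi>v x"
    and ninj: "\<forall>p q. p \<in> \<rat> \<longrightarrow> q \<in> \<rat> \<longrightarrow> a < p \<longrightarrow> p < x \<longrightarrow> x < q \<longrightarrow> q < b
                 \<longrightarrow> \<not> inj_on g {p..q}"
  shows "(g has_real_derivative 0) (at x)"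
proof -
  define \<psi> where "\<psi> = \<phi>u x - \<phi>v x"
  have cont: "\<exists>d>0. \<forall>z. \<bar>z - x\<bar> < d \<longrightarrow> z \<in> {a<..<b} \<and> \<bar>\<phi>u z - \<phi>u x\<bar> < e \<and> \<bar>\<phi>v z - \<phi>v x\<bar> < e"
    if "e > 0" for e
  proof -
    obtain d1 where d1: "d1 > 0" "\<forall>z. dist z x < d1 \<longrightarrow> dist (\<phi>u z) (\<phi>u x) < e"
      using cu \<open>e > 0\<close> unfolding continuous_at_eps_delta by blast
    obtain d2 where d2: "d2 > 0" "\<forall>z. dist z x < d2 \<longrightarrow> dist (\<phi>v z) (\<phi>v x) < e"
      using cv \<open>e > 0\<close> unfolding continuous_at_eps_delta by blast
    define d where "d = min (min d1 d2) (min (x - a) (b - x))"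
    have "d > 0" using d1 d2 x by (auto simp: d_def)
    moreover have "\<forall>z. \<bar>z - x\<bar> < d \<longrightarrow> z \<in> {a<..<b} \<and> \<bar>\<phi>u z - \<phi>u x\<bar> < e \<and> \<bar>\<phi>v z - \<phi>v x\<bar> < e"
      using d1 d2 by (auto simp: d_def dist_real_def)
    ultimately show ?thesis by blast
  qed
  have der: "(g has_real_derivative \<psi>) (at x)"
    unfolding has_field_derivative_iff LIM_eq
  proof (intro allI impI)
    fix r :: real assume r: "r > 0"
    obtain d where d: "d > 0" "\<forall>z. \<bar>z - x\<bar> < d \<longrightarrow> z \<in> {a<..<b} \<and> \<bar>\<phi>u z - \<phi>u x\<bar> < r/2 \<and> \<bar>\<phi>v z - \<phi>v x\<bar> < r/2"
      using cont[of "r/2"] r by auto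
    show "\<exists>s>0. \<forall>z. z \<noteq> x \<and> norm (z - x) < s \<longrightarrow> norm ((g z - g x) / (z - x) - \<psi>) < r"
    proof (intro exI conjI allI impI)
      fix z assume z: "z \<noteq> x \<and> norm (z - x) < d"
      then have zi: "z \<in> {a<..<b}" and bu: "\<bar>\<phi>u z - \<phi>u x\<bar> < r/2" and bv: "\<bar>\<phi>v z - \<phi>v x\<bar> < r/2"
        using d by auto
      have su: "\<bar>(u z - u x) / (z - x) - \<phi>u x\<bar> \<le> \<bar>\<phi>u z - \<phi>u x\<bar>"
        using slope_bound[OF subu x zi] z by auto
      have sv: "\<bar>(v z - v x) / (z - x) - \<phi>v x\<bar> \<le> \<bar>\<phi>v z - \<phi>v x\<bar>"
        using slope_bound[OF subv x zi] z by auto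
      have "(g z - g x) / (z - x) = (u z - u x) / (z - x) - (v z - v x) / (z - x)"
        using geq x zi by (simp add: diff_divide_distrib)
      moreover have "\<bar>(u z - u x) / (z - x) - (v z - v x) / (z - x) - (\<phi>u x - \<phi>v x)\<bar>
          \<le> \<bar>(u z - u x) / (z - x) - \<phi>u x\<bar> + \<bar>(v z - v x) / (z - x) - \<phi>v x\<bar>" by arith
      ultimately show "norm ((g z - g x) / (z - x) - \<psi>) < r"
        using su sv bu bv by (simp add: \<psi>_def)
    qed (use d in auto)
  qed
  have "\<psi> = 0"
  proof (rule ccontr)
    assume "\<psi> \<noteq> 0"
    then obtain d where d: "d > 0" "\<forall>z. \<bar>z - x\<bar> < d \<longrightarrow> z \<in> {a<..<b} \<and> \<bar>\<phi>u z - \<phi>u x\<bar> < \<bar>\<psi>\<bar>/2 \<and> \<bar>\<phi>v z - \<phi>v x\<bar> < \<bar>\<psi>\<bar>/2"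
      using cont[of "\<bar>\<psi>\<bar>/2"] by auto
    obtain p where p: "p \<in> \<rat>" "x - d < p" "p < x" using Rats_dense_in_real[of "x - d" x] d by auto
    obtain q where q: "q \<in> \<rat>" "x < q" "q < x + d" using Rats_dense_in_real[of x "x + d"] d by auto
    have near: "y \<in> {a<..<b} \<and> \<bar>\<phi>u y - \<phi>u x\<bar> < \<bar>\<psi>\<bar>/2 \<and> \<bar>\<phi>v y - \<phi>v x\<bar> < \<bar>\<psi>\<bar>/2"
      if "p \<le> y" "y \<le> q" for y
      using d(2)[rule_format, of y] p q that by auto
    have ne: "g y \<noteq> g z" if yz: "p \<le> y" "y < z" "z \<le> q" for y z
    proof -
      have ny: "y \<in> {a<..<b}" "\<bar>\<phi>u y - \<phi>u x\<bar> < \<bar>\<psi>\<bar>/2" "\<bar>\<phi>v y - \<phi>v x\<bar> < \<bar>\<psi>\<bar>/2"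
        using near[of y] yz by auto
      have nz: "z \<in> {a<..<b}" "\<bar>\<phi>u z - \<phi>u x\<bar> < \<bar>\<psi>\<bar>/2" "\<bar>\<phi>v z - \<phi>v x\<bar> < \<bar>\<psi>\<bar>/2"
        using near[of z] yz by auto
      have u1: "\<phi>u y * (z - y) \<le> u z - u y" using subu ny nz by blast
      have u2: "\<phi>u z * (y - z) \<le> u y - u z" using subu ny nz by blast
      have v1: "\<phi>v y * (z - y) \<le> v z - v y" using subv ny nz by blast
      have v2: "\<phi>v z * (y - z) \<le> v y - v z" using subv ny nz by blast
      have gd: "g z - g y = (u z - u y) - (v z - v y)" using geq ny nz by simp
      have zy: "z - y > 0" using yz by simp
      show ?thesis
      proof (cases "\<psi> > 0")
        case True
        have "\<bar>\<psi>\<bar> = \<psi>" using True by simp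
        then have "\<phi>u y > \<phi>u x - \<psi>/2" "\<phi>v z < \<phi>v x + \<psi>/2" using ny(2) nz(3) by (arith, arith)
        then have "\<phi>u y - \<phi>v z > 0" using \<psi>_def by linarith
        then have "(\<phi>u y - \<phi>v z) * (z - y) > 0" using zy by simp
        then have "g z - g y > 0" using gd u1 v2 by (simp add: algebra_simps)
        then show ?thesis by simp
      next
        case False
        then have neg: "\<psi> < 0" using \<open>\<psi> \<noteq> 0\<close> by simp
        have "\<bar>\<psi>\<bar> = - \<psi>" using neg by simp
        then have "\<phi>u z < \<phi>u x - \<psi>/2" "\<phi>v y > \<phi>v x + \<psi>/2" using ny(3) nz(2) by (arith, arith)
        then have "\<phi>u z - \<phi>v y < 0" using \<psi>_def by linarith
        then have "(\<phi>u z - \<phi>v y) * (z - y) < 0" using zy by (simp add: mult_neg_pos)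
        then have "g z - g y < 0" using gd u2 v1 by (simp add: algebra_simps)
        then show ?thesis by simp
      qed
    qed
    have "inj_on g {p..q}"
    proof (rule inj_onI)
      fix y z assume "y \<in> {p..q}" "z \<in> {p..q}" "g y = g z"
      then show "y = z" using ne[of y z] ne[of z y] by (cases y z rule: linorder_cases) auto
    qed
    moreover have "a < p" "q < b" using near[of p] near[of q] p q by auto
    ultimately show False using ninj p q by blast
  qed
  then show ?thesis using der by simp
qed

lemma inj_piece:
  fixes g :: "real \<Rightarrow> real"
  assumes cg: "continuous_on {p..q} g" and ig: "inj_on g {p..q}"
    and A: "A \<subseteq> {p..q}" and iA: "interior A = {}"
  shows "interior (g ` A) = {}"
proof (rule ccontr)
  assume ne: "interior (g ` A) \<noteq> {}"
  define U where "U = interior (g ` A) - {g p, g q}"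
  have oU: "open U" unfolding U_def by (intro open_Diff) auto
  have "U \<noteq> {}"
  proof
    assume "U = {}"
    then have "interior (g ` A) \<subseteq> {g p, g q}" unfolding U_def by auto
    then have "finite (interior (g ` A))" by (meson finite.emptyI finite_insert finite_subset)
    then show False using finite_imp_not_open[of "interior (g ` A)"] ne by auto
  qed
  then obtain y where y: "y \<in> U" by auto
  then obtain x where x: "x \<in> A" "y = g x" unfolding U_def using interior_subset by blast
  have "x \<in> {p..q}" using x A by blast
  moreover have "x \<noteq> p" "x \<noteq> q" using x(2) y unfolding U_def by auto
  ultimately have xpq: "p < x" "x < q" by auto
  have "isCont g x"
    using continuous_on_interior[OF cg] xpq by auto
  then obtain s where s: "open s" "x \<in> s" "\<forall>x'\<in>s. g x' \<in> U"
    using oU y x(2) unfolding continuous_at_open[of x g] by blast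
  then obtain d where d0: "d > 0" and ds: "ball x d \<subseteq> s" using openE by blast
  have d: "d > 0" "\<And>z. dist z x < d \<Longrightarrow> g z \<in> U"
    using d0 ds s(3) by (auto simp: dist_commute subset_iff)
  define d' where "d' = min d (min (x - p) (q - x))"
  have "d' > 0" using d xpq by (simp add: d'_def)
  have "ball x d' \<subseteq> A"
  proof
    fix z assume z: "z \<in> ball x d'"
    then have zpq: "z \<in> {p..q}" by (auto simp: d'_def dist_real_def)
    have "g z \<in> U" using d z by (auto simp: d'_def dist_commute)
    then have "g z \<in> g ` A" unfolding U_def using interior_subset by blast
    then obtain w where "w \<in> A" "g z = g w" by auto
    moreover have "w \<in> {p..q}" using \<open>w \<in> A\<close> A by blast
    ultimately have "z = w" using inj_onD[OF ig _ zpq] by blast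
    then show "z \<in> A" using \<open>w \<in> A\<close> by simp
  qed
  then have "ball x d' \<subseteq> interior A" by (simp add: interior_maximal)
  then show False using iA \<open>d' > 0\<close> by auto
qed

lemma negligible_imp_interior_empty:
  fixes T :: "real set"
  assumes "negligible T" shows "interior T = {}"
  using open_not_negligible[of "interior T"] negligible_subset[OF assms interior_subset] by auto

lemma countable_negligible_real:
  fixes S :: "real set"
  assumes "countable S" shows "negligible S"
proof -
  have "negligible (\<Union>((\<lambda>x. {x}) ` S))"
    by (rule negligible_countable_Union) (use assms in auto)
  then show ?thesis by simp
qed

theorem proposition2p15:
  fixes g :: "real \<Rightarrow> real" and a b :: real and P :: "real set"
  assumes "continuous_on {a..b} g"
    and "DC_on {a<..<b} g"
    and "P \<subseteq> {a..b}"
    and "nowhere_dense P"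
  shows "nowhere_dense (g ` P)"
proof -
  note cg = assms(1)
  obtain u v where cu: "convex_on {a<..<b} u" and cv: "convex_on {a<..<b} v"
    and geq: "\<forall>x\<in>{a<..<b}. g x = u x - v x"
    using assms(2) unfolding DC_on_def by blast
  obtain \<phi>u where mu: "mono_on {a<..<b} \<phi>u"
    and subu: "\<forall>x\<in>{a<..<b}. \<forall>y\<in>{a<..<b}. \<phi>u x * (y - x) \<le> u y - u x"
    using convex_subgradient[OF cu] by blast
  obtain \<phi>v where mv: "mono_on {a<..<b} \<phi>v"
    and subv: "\<forall>x\<in>{a<..<b}. \<forall>y\<in>{a<..<b}. \<phi>v x * (y - x) \<le> v y - v x"
    using convex_subgradient[OF cv] by blast
  define P' where "P' = closure P"
  have P'ab: "P' \<subseteq> {a..b}" unfolding P'_def using assms(3) by (simp add: closure_minimal)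
  have cP': "closed P'" unfolding P'_def by simp
  have iP': "interior P' = {}" using assms(4) unfolding P'_def nowhere_dense_def by simp
  define Q where "Q = {(p, q). p \<in> \<rat> \<and> q \<in> \<rat> \<and> a < p \<and> p < q \<and> q < b \<and> inj_on g {p..q}}"
  define K where "K = {a..b} - (\<Union>(p, q)\<in>Q. {p<..<q})"
  define G where "G = (\<lambda>(p, q). g ` (P' \<inter> {p..q})) ` Q \<union> {g ` (P' \<inter> K)}"
  have cQ: "countable Q"
  proof -
    have "Q \<subseteq> \<rat> \<times> \<rat>" unfolding Q_def by auto
    moreover have "countable (\<rat> \<times> (\<rat>::real set))" by (intro countable_SIGMA countable_rat)
    ultimately show ?thesis using countable_subset by blast
  qed
  have cG: "countable G" unfolding G_def using cQ by blast
  have closedK: "closed K" unfolding K_def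
    by (intro closed_Diff) (auto intro!: open_Union)
  have compimg: "closed (g ` (P' \<inter> S))" if "closed S" for S
  proof -
    have "compact (P' \<inter> S)"
      using cP' that P'ab by (meson bounded_closed_interval bounded_subset closed_Int compact_eq_bounded_closed inf.coboundedI1)
    moreover have "continuous_on (P' \<inter> S) g" using continuous_on_subset[OF cg] P'ab by blast
    ultimately show ?thesis by (intro compact_imp_closed compact_continuous_image)
  qed
  define Z where "Z = {x\<in>{a<..<b}. (g has_real_derivative 0) (at x)}"
  define D where "D = {x\<in>{a<..<b}. \<not> isCont \<phi>u x} \<union> {x\<in>{a<..<b}. \<not> isCont \<phi>v x}"
  have cD: "countable D" unfolding D_def
    using mono_on_ctble_discont_open[OF _ mu] mono_on_ctble_discont_open[OF _ mv] by auto
  have Ksub: "K \<subseteq> Z \<union> D \<union> {a, b}"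
  proof
    fix x assume xK: "x \<in> K"
    show "x \<in> Z \<union> D \<union> {a, b}"
    proof (cases "x \<in> {a<..<b} \<and> x \<notin> D")
      case True
      have ninj: "\<forall>p q. p \<in> \<rat> \<longrightarrow> q \<in> \<rat> \<longrightarrow> a < p \<longrightarrow> p < x \<longrightarrow> x < q \<longrightarrow> q < b
                 \<longrightarrow> \<not> inj_on g {p..q}"
      proof (intro allI impI notI)
        fix p q assume "p \<in> \<rat>" "q \<in> \<rat>" "a < p" "p < x" "x < q" "q < b" "inj_on g {p..q}"
        then have "(p, q) \<in> Q" unfolding Q_def by auto
        moreover have "x \<in> {p<..<q}" using \<open>p < x\<close> \<open>x < q\<close> by simp
        ultimately have "x \<in> (\<Union>(p, q)\<in>Q. {p<..<q})" by (rule UN_I[where b=x, OF _ ssubst[OF case_prod_conv]])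
        then show False using xK unfolding K_def by blast
      qed
      have "(g has_real_derivative 0) (at x)"
        by (rule key_deriv[OF subu subv geq _ _ _ ninj]) (use True in \<open>auto simp: D_def\<close>)
      then show ?thesis using True unfolding Z_def by auto
    next
      case False
      have "x \<in> {a..b}" using xK unfolding K_def by (rule DiffD1)
      then have "x = a \<or> x = b \<or> x \<in> D" using False by auto
      then show ?thesis by blast
    qed
  qed
  have negK: "negligible (g ` (P' \<inter> K))"
  proof -
    have "g ` (P' \<inter> K) \<subseteq> g ` Z \<union> g ` (D \<union> {a, b})" using Ksub by blast
    moreover have "negligible (g ` Z)" by (rule sard_1d) (auto simp: Z_def)
    moreover have "negligible (g ` (D \<union> {a, b}))"
      by (rule countable_negligible_real) (use cD in auto)
    ultimately show ?thesis by (meson negligible_subset negligible_Un)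
  qed
  have Gprops: "closed T \<and> interior T = {}" if TG: "T \<in> G" for T
  proof (cases "T = g ` (P' \<inter> K)")
    case True
    then show ?thesis using compimg[OF closedK] negligible_imp_interior_empty[OF negK] by simp
  next
    case False
    then have "T \<in> (\<lambda>(p, q). g ` (P' \<inter> {p..q})) ` Q" using TG unfolding G_def by blast
    then obtain pq where "pq \<in> Q" "T = (\<lambda>(p, q). g ` (P' \<inter> {p..q})) pq" by (rule imageE)
    then obtain p q where pq: "(p, q) \<in> Q" "T = g ` (P' \<inter> {p..q})" by (cases pq) simp
    then have pq': "a < p" "q < b" "inj_on g {p..q}" unfolding Q_def by auto
    have "continuous_on {p..q} g" using continuous_on_subset[OF cg] pq' by auto
    moreover have "interior (P' \<inter> {p..q}) \<subseteq> interior P'" by (intro interior_mono) auto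
    then have "interior (P' \<inter> {p..q}) = {}" using iP' by simp
    ultimately have "interior T = {}" using inj_piece[OF _ pq'(3), of "P' \<inter> {p..q}"] pq by auto
    then show ?thesis using compimg[of "{p..q}"] pq by auto
  qed
  have cover: "g ` P' \<subseteq> \<Union>G"
  proof
    fix y assume "y \<in> g ` P'"
    then obtain x where x: "x \<in> P'" "y = g x" by auto
    show "y \<in> \<Union>G"
    proof (cases "x \<in> K")
      case True
      have "g ` (P' \<inter> K) \<in> G" unfolding G_def by (rule UnI2) simp
      moreover have "y \<in> g ` (P' \<inter> K)" using x True by blast
      ultimately show ?thesis by (rule UnionI)
    next
      case False
      then have "x \<in> (\<Union>(p, q)\<in>Q. {p<..<q})" using x P'ab unfolding K_def by blast
      then obtain pq where "pq \<in> Q" "x \<in> (case pq of (p, q) \<Rightarrow> {p<..<q})" by blast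
      then obtain p q where "(p, q) \<in> Q" "x \<in> {p<..<q}" by (cases pq) auto
      then have "y \<in> g ` (P' \<inter> {p..q})" using x by auto
      moreover have "g ` (P' \<inter> {p..q}) \<in> G" unfolding G_def
        by (rule UnI1, rule image_eqI[of _ _ "(p, q)"]) (simp_all add: \<open>(p, q) \<in> Q\<close>)
      ultimately show ?thesis by (rule UnionI[rotated])
    qed
  qed
  have "interior (\<Union>G) = {}"
    using Baire_category_alt[of euclidean G] cG Gprops
    by (simp add: completely_metrizable_space_euclidean)
  moreover have "closure (g ` P) \<subseteq> g ` P'"
  proof (rule closure_minimal)
    show "g ` P \<subseteq> g ` P'" unfolding P'_def using closure_subset by blast
    show "closed (g ` P')" using compimg[of UNIV] by simp
  qed
  ultimately have "interior (closure (g ` P)) = {}"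
    using cover by (metis interior_mono subset_empty order_trans)
  then show ?thesis unfolding nowhere_dense_def .
qed

end
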